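(* Every (fork, dart)-free graph $G$ satisfies $\chi(G)\le \omega(G)^2$.
   Context: All graphs are finite and simple; $\chi$ is chromatic number, $\omega$ clique number. The fork is obtained from $K_{1,3}$ by subdividing one edge once. The dart is the graph on $v_1,\dots,v_5$ where $v_1$ is adjacent to $v_2,v_3,v_4$, the set $\{v_2,v_3,v_4\}$ is stable, and $v_5$ is adjacent to $v_1,v_3,v_4$ but not to $v_2$. $G$ is $(H_1,H_2)$-free if it has no induced subgraph isomorphic to $H_1$ or $H_2$. *)

theory Defs
  imports Main
begin

definition simple_graph :: "'a set \<Rightarrow> ('a \<Rightarrow> 'a \<Rightarrow> bool) \<Rightarrow> bool" where
  "simple_graph V E \<longleftrightarrow> finite V \<and> (\<forall>x y. E x y \<longrightarrow> E y x) \<and> (\<forall>x. \<not> E x x)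
     \<and> (\<forall>x y. E x y \<longrightarrow> x \<in> V \<and> y \<in> V)"

definition has_induced :: "'a set \<Rightarrow> ('a \<Rightarrow> 'a \<Rightarrow> bool) \<Rightarrow> nat \<Rightarrow> (nat \<Rightarrow> nat \<Rightarrow> bool) \<Rightarrow> bool" where
  "has_induced V E n F \<longleftrightarrow> (\<exists>f. inj_on f {0..<n} \<and> f ` {0..<n} \<subseteq> V \<and>
     (\<forall>i\<in>{0..<n}. \<forall>j\<in>{0..<n}. E (f i) (f j) \<longleftrightarrow> F i j))"

text \<open>Fork: K_{1,3} (centre 0, leaves 1,2,3) with edge 0--3 subdivided by 4.\<close>
definition fork_edge :: "nat \<Rightarrow> nat \<Rightarrow> bool" where
  "fork_edge i j \<longleftrightarrow> {i, j} \<in> {{0,1}, {0,2}, {0,4}, {4,3}}"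

text \<open>Dart: v1..v5 renamed 0..4; v1 adjacent to v2,v3,v4; v5 adjacent to v1,v3,v4;
  {v2,v3,v4} stable; v5 not adjacent to v2.\<close>
definition dart_edge :: "nat \<Rightarrow> nat \<Rightarrow> bool" where
  "dart_edge i j \<longleftrightarrow> {i, j} \<in> {{0,1}, {0,2}, {0,3}, {4,0}, {4,2}, {4,3}}"

definition clique :: "'a set \<Rightarrow> ('a \<Rightarrow> 'a \<Rightarrow> bool) \<Rightarrow> 'a set \<Rightarrow> bool" where
  "clique V E K \<longleftrightarrow> K \<subseteq> V \<and> (\<forall>x\<in>K. \<forall>y\<in>K. x \<noteq> y \<longrightarrow> E x y)"

definition clique_number :: "'a set \<Rightarrow> ('a \<Rightarrow> 'a \<Rightarrow> bool) \<Rightarrow> nat" where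
  "clique_number V E = Max {card K | K. clique V E K}"

definition proper_colouring :: "'a set \<Rightarrow> ('a \<Rightarrow> 'a \<Rightarrow> bool) \<Rightarrow> nat \<Rightarrow> ('a \<Rightarrow> nat) \<Rightarrow> bool" where
  "proper_colouring V E k c \<longleftrightarrow> (\<forall>x\<in>V. c x < k) \<and> (\<forall>x\<in>V. \<forall>y\<in>V. E x y \<longrightarrow> c x \<noteq> c y)"

definition chromatic_number :: "'a set \<Rightarrow> ('a \<Rightarrow> 'a \<Rightarrow> bool) \<Rightarrow> nat" where
  "chromatic_number V E = (LEAST k. \<exists>c. proper_colouring V E k c)"

end

theory Submission
  imports Defs
begin

definition col :: "('a \<Rightarrow> 'a \<Rightarrow> bool) \<Rightarrow> 'a set \<Rightarrow> nat \<Rightarrow> bool" where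
  "col E X k \<longleftrightarrow> (\<exists>f. (\<forall>x\<in>X. f x < k) \<and> (\<forall>x\<in>X. \<forall>y\<in>X. E x y \<longrightarrow> f x \<noteq> f y))"
definition cq :: "('a \<Rightarrow> 'a \<Rightarrow> bool) \<Rightarrow> 'a set \<Rightarrow> bool" where
  "cq E K \<longleftrightarrow> (\<forall>x\<in>K. \<forall>y\<in>K. x \<noteq> y \<longrightarrow> E x y)"
definition cb :: "('a \<Rightarrow> 'a \<Rightarrow> bool) \<Rightarrow> 'a set \<Rightarrow> nat \<Rightarrow> bool" where
  "cb E X k \<longleftrightarrow> (\<forall>K. K \<subseteq> X \<longrightarrow> cq E K \<longrightarrow> card K \<le> k)"
definition p3f :: "('a \<Rightarrow> 'a \<Rightarrow> bool) \<Rightarrow> 'a set \<Rightarrow> bool" where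
  "p3f E X \<longleftrightarrow> (\<forall>x\<in>X. \<forall>y\<in>X. \<forall>z\<in>X. E x y \<longrightarrow> E y z \<longrightarrow> x \<noteq> z \<longrightarrow> E x z)"

lemma col_mono: "col E X k \<Longrightarrow> k \<le> k' \<Longrightarrow> col E X k'"
  unfolding col_def by (meson less_le_trans)

lemma col_sub: "col E X k \<Longrightarrow> Y \<subseteq> X \<Longrightarrow> col E Y k"
  unfolding col_def by blast

lemma col_empty: "col E {} k"
  unfolding col_def by auto

lemma col_union:
  assumes "col E X k1" "col E Y k2"
  shows "col E (X \<union> Y) (k1 + k2)"
proof -
  obtain f1 where f1: "\<forall>x\<in>X. f1 x < k1" "\<forall>x\<in>X. \<forall>y\<in>X. E x y \<longrightarrow> f1 x \<noteq> f1 y"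
    using assms(1) unfolding col_def by blast
  obtain f2 where f2: "\<forall>x\<in>Y. f2 x < k2" "\<forall>x\<in>Y. \<forall>y\<in>Y. E x y \<longrightarrow> f2 x \<noteq> f2 y"
    using assms(2) unfolding col_def by blast
  define g where "g x = (if x \<in> X then f1 x else k1 + f2 x)" for x
  have "\<forall>x\<in>X \<union> Y. g x < k1 + k2" using f1 f2 by (auto simp: g_def)
  moreover have "\<forall>x\<in>X \<union> Y. \<forall>y\<in>X \<union> Y. E x y \<longrightarrow> g x \<noteq> g y"
  proof (intro ballI impI)
    fix x y assume "x \<in> X \<union> Y" "y \<in> X \<union> Y" "E x y"
    show "g x \<noteq> g y"
    proof (cases "x \<in> X"; cases "y \<in> X")
      assume "x \<in> X" "y \<in> X" then show ?thesis using f1(2) \<open>E x y\<close> by (simp add: g_def)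
    next
      assume "x \<in> X" "y \<notin> X" moreover then have "f1 x < k1" using f1(1) by blast ultimately show ?thesis by (simp add: g_def)
    next
      assume "x \<notin> X" "y \<in> X" moreover then have "f1 y < k1" using f1(1) by blast ultimately show ?thesis by (simp add: g_def)
    next
      assume "x \<notin> X" "y \<notin> X" then show ?thesis using f2(2) \<open>E x y\<close> \<open>x \<in> X \<union> Y\<close> \<open>y \<in> X \<union> Y\<close> by (simp add: g_def)
    qed
  qed
  ultimately show ?thesis unfolding col_def by blast
qed

lemma col_split:
  assumes "col E X k" "col E Y k" "\<forall>x\<in>X. \<forall>y\<in>Y. \<not> E x y \<and> \<not> E y x"
  shows "col E (X \<union> Y) k"
proof -
  obtain f1 where f1: "\<forall>x\<in>X. f1 x < k" "\<forall>x\<in>X. \<forall>y\<in>X. E x y \<longrightarrow> f1 x \<noteq> f1 y"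
    using assms(1) unfolding col_def by blast
  obtain f2 where f2: "\<forall>x\<in>Y. f2 x < k" "\<forall>x\<in>Y. \<forall>y\<in>Y. E x y \<longrightarrow> f2 x \<noteq> f2 y"
    using assms(2) unfolding col_def by blast
  define g where "g x = (if x \<in> X then f1 x else f2 x)" for x
  have "\<forall>x\<in>X \<union> Y. g x < k" using f1 f2 by (auto simp: g_def)
  moreover have "\<forall>x\<in>X \<union> Y. \<forall>y\<in>X \<union> Y. E x y \<longrightarrow> g x \<noteq> g y"
  proof (intro ballI impI)
    fix x y assume "x \<in> X \<union> Y" "y \<in> X \<union> Y" "E x y"
    show "g x \<noteq> g y"
    proof (cases "x \<in> X"; cases "y \<in> X")
      assume "x \<in> X" "y \<in> X" then show ?thesis using f1(2) \<open>E x y\<close> by (simp add: g_def)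
    next
      assume "x \<in> X" "y \<notin> X" then show ?thesis using assms(3) \<open>E x y\<close> \<open>y \<in> X \<union> Y\<close> by blast
    next
      assume "x \<notin> X" "y \<in> X" then show ?thesis using assms(3) \<open>E x y\<close> \<open>x \<in> X \<union> Y\<close> by blast
    next
      assume "x \<notin> X" "y \<notin> X" then show ?thesis using f2(2) \<open>E x y\<close> \<open>x \<in> X \<union> Y\<close> \<open>y \<in> X \<union> Y\<close> by (simp add: g_def)
    qed
  qed
  ultimately show ?thesis unfolding col_def by blast
qed

lemma col_vertex:
  assumes fin: "finite X" and v: "v \<in> X" and c: "col E (X - {v}) k"
    and deg: "card {u\<in>X. E v u} < k"
    and sym: "\<And>x y. E x y \<Longrightarrow> E y x" and irr: "\<And>x. \<not> E x x"
  shows "col E X k"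
proof -
  obtain f where f: "\<forall>x\<in>X - {v}. f x < k" "\<forall>x\<in>X - {v}. \<forall>y\<in>X - {v}. E x y \<longrightarrow> f x \<noteq> f y"
    using c unfolding col_def by blast
  let ?S = "f ` {u\<in>X. E v u}"
  have "card ?S < k" using deg card_image_le[of "{u\<in>X. E v u}" f] fin by simp
  have "\<exists>c<k. c \<notin> ?S"
  proof (rule ccontr)
    assume "\<not> ?thesis"
    then have "{..<k} \<subseteq> ?S" by auto
    then have "k \<le> card ?S" using card_mono[of ?S "{..<k}"] fin by simp
    then show False using \<open>card ?S < k\<close> by simp
  qed
  then obtain c where c: "c < k" "c \<notin> ?S" by blast
  define g where "g = f(v := c)"
  have "\<forall>x\<in>X. g x < k" using f c by (auto simp: g_def)
  moreover have "\<forall>x\<in>X. \<forall>y\<in>X. E x y \<longrightarrow> g x \<noteq> g y"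
  proof (intro ballI impI)
    fix x y assume xy: "x \<in> X" "y \<in> X" "E x y"
    have "x \<noteq> y" using xy irr by metis
    show "g x \<noteq> g y"
    proof (cases "x = v")
      case True
      then have "y \<noteq> v" using \<open>x \<noteq> y\<close> by simp
      then have "f y \<in> ?S" using xy True by auto
      then show ?thesis using True \<open>y \<noteq> v\<close> c by (auto simp: g_def)
    next
      case False
      show ?thesis
      proof (cases "y = v")
        case True
        have "E y x" using sym[OF xy(3)] .
        then have "f x \<in> ?S" using xy True by auto
        then show ?thesis using True False c by (auto simp: g_def)
      next
        case False2: False
        then show ?thesis using False f xy by (auto simp: g_def)
      qed
    qed
  qed
  ultimately show ?thesis unfolding col_def by blast
qed

lemma col_p3:
  assumes fin: "finite X" and p: "p3f E X" and cb: "cb E X k"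
    and sym: "\<And>x y. E x y \<Longrightarrow> E y x" and irr: "\<And>x. \<not> E x x"
  shows "col E X k"
proof -
  obtain g :: "'a \<Rightarrow> nat" and n where g: "g ` X = {i. i < n}" "inj_on g X"
    using finite_imp_inj_to_nat_seg[OF fin] by blast
  define C where "C x = {y\<in>X. y = x \<or> E x y}" for x
  define f where "f x = card {y\<in>C x. g y < g x}" for x
  have pp: "\<And>a b d. a\<in>X \<Longrightarrow> b\<in>X \<Longrightarrow> d\<in>X \<Longrightarrow> E a b \<Longrightarrow> E b d \<Longrightarrow> a \<noteq> d \<Longrightarrow> E a d"
    using p unfolding p3f_def by blast
  have Ceq: "C x = C y" if "x \<in> X" "y \<in> X" "E x y" for x y
  proof -
    have "E y x" using sym[OF that(3)] .
    have 1: "z \<in> C y" if "z \<in> C x" for z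
    proof -
      have z: "z \<in> X" "z = x \<or> E x z" using that unfolding C_def by auto
      have "z = y \<or> E y z"
      proof (cases "z = y")
        case False
        then show ?thesis using z \<open>E y x\<close> pp[of y x z] \<open>x \<in> X\<close> \<open>y \<in> X\<close> by auto
      qed simp
      then show ?thesis using z unfolding C_def by simp
    qed
    have 2: "z \<in> C x" if "z \<in> C y" for z
    proof -
      have z: "z \<in> X" "z = y \<or> E y z" using that unfolding C_def by auto
      have "z = x \<or> E x z"
      proof (cases "z = x")
        case False
        then show ?thesis using z \<open>E x y\<close> pp[of x y z] \<open>x \<in> X\<close> \<open>y \<in> X\<close> by auto
      qed simp
      then show ?thesis using z unfolding C_def by simp
    qed
    show ?thesis using 1 2 by blast
  qed
  have Ccq: "cq E (C x)" if "x \<in> X" for x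
    unfolding cq_def
  proof (intro ballI impI)
    fix a b assume ab: "a \<in> C x" "b \<in> C x" "a \<noteq> b"
    show "E a b"
    proof (cases "a = x")
      case True then show ?thesis using ab unfolding C_def by auto
    next
      case False
      show ?thesis
      proof (cases "b = x")
        case True
        have "E x a" using ab False unfolding C_def by auto
        then show ?thesis using True sym by metis
      next
        case False2: False
        have "E x a" "E x b" "a \<in> X" "b \<in> X" using ab False False2 unfolding C_def by auto
        moreover have "E a x" using sym \<open>E x a\<close> by metis
        ultimately have "E a x" "E x b" "a \<in> X" "b \<in> X" by auto
        then show ?thesis using pp[of a x b] that ab(3) by blast
      qed
    qed
  qed
  have Cfin: "finite (C x)" for x using fin unfolding C_def by auto
  have "\<forall>x\<in>X. f x < k"
  proof
    fix x assume x: "x \<in> X"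
    have "C x \<subseteq> X" unfolding C_def by auto
    then have "card (C x) \<le> k" using cb Ccq[OF x] unfolding cb_def by blast
    moreover have "{y\<in>C x. g y < g x} \<subset> C x" using x unfolding C_def by auto
    then have "card {y\<in>C x. g y < g x} < card (C x)" using Cfin psubset_card_mono by blast
    ultimately have "card {y\<in>C x. g y < g x} < k" by linarith
    then show "f x < k" unfolding f_def by simp
  qed
  moreover have "\<forall>x\<in>X. \<forall>y\<in>X. E x y \<longrightarrow> f x \<noteq> f y"
  proof (intro ballI impI)
    fix x y assume xy: "x \<in> X" "y \<in> X" "E x y"
    have "x \<noteq> y" using xy irr by metis
    then have gne: "g x \<noteq> g y" using inj_onD[OF g(2)] xy(1,2) by blast
    have CC: "C x = C y" using Ceq xy by blast
    have "E y x" using sym[OF xy(3)] .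
    then have xin: "x \<in> C y" "y \<in> C x" using xy unfolding C_def by auto
    have lt: "card {z\<in>C u. g z < g u} < card {z\<in>C u. g z < g u'}"
      if "u \<in> C u'" "C u = C u'" "g u < g u'" for u u'
    proof -
      have "u \<in> C u" using that(1,2) by simp
      have sub: "{z\<in>C u. g z < g u} \<subseteq> {z\<in>C u. g z < g u'}" using that(3) by auto
      have "u \<in> {z\<in>C u. g z < g u'}" "u \<notin> {z\<in>C u. g z < g u}" using \<open>u \<in> C u\<close> that(3) by auto
      then have ps: "{z\<in>C u. g z < g u} \<subset> {z\<in>C u. g z < g u'}" using sub by blast
      have "finite {z\<in>C u. g z < g u'}" using Cfin[of u] by simp
      then show ?thesis using ps psubset_card_mono by blast
    qed
    show "f x \<noteq> f y"
    proof (cases "g x < g y")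
      case True
      have A: "card {z\<in>C x. g z < g x} < card {z\<in>C x. g z < g y}"
        using lt[OF xin(1) CC True] .
      have "f y = card {z\<in>C x. g z < g y}" unfolding f_def CC ..
      moreover have "f x = card {z\<in>C x. g z < g x}" unfolding f_def ..
      ultimately show ?thesis using A by linarith
    next
      case False
      then have lt2: "g y < g x" using gne by linarith
      have A: "card {z\<in>C y. g z < g y} < card {z\<in>C y. g z < g x}"
        using lt[OF xin(2) CC[symmetric] lt2] .
      have "f x = card {z\<in>C y. g z < g x}" unfolding f_def CC ..
      moreover have "f y = card {z\<in>C y. g z < g y}" unfolding f_def ..
      ultimately show ?thesis using A by linarith
    qed
  qed
  ultimately show ?thesis unfolding col_def by blast
qed

lemma cb_sub: "cb E X k \<Longrightarrow> Y \<subseteq> X \<Longrightarrow> cb E Y k"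
  unfolding cb_def by blast

lemma cb_ext:
  assumes cb: "cb E X w" and fin: "finite X" and sub: "Y \<subseteq> X"
    and ext: "\<And>K. K \<subseteq> Y \<Longrightarrow> cq E K \<Longrightarrow> K \<noteq> {} \<Longrightarrow> \<exists>y\<in>X. y \<notin> K \<and> (\<forall>x\<in>K. E y x)"
    and sym: "\<And>x y. E x y \<Longrightarrow> E y x"
  shows "cb E Y (w - 1)"
  unfolding cb_def
proof (intro allI impI)
  fix K assume K: "K \<subseteq> Y" "cq E K"
  show "card K \<le> w - 1"
  proof (cases "K = {}")
    case True then show ?thesis by simp
  next
    case False
    from ext[OF K(1) K(2) False] obtain y where y: "y \<in> X" "y \<notin> K" "\<forall>x\<in>K. E y x" by blast
    have yK: "E x y" if "x \<in> K" for x
    proof -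
      have "E y x" using y(3) that by blast
      then show "E x y" by (rule sym)
    qed
    have "cq E (insert y K)" unfolding cq_def
    proof (intro ballI impI)
      fix a b assume ab: "a \<in> insert y K" "b \<in> insert y K" "a \<noteq> b"
      show "E a b"
      proof (cases "a = y")
        case True then show ?thesis using ab y(3) by auto
      next
        case False
        then have "a \<in> K" using ab by auto
        show ?thesis
        proof (cases "b = y")
          case True then show ?thesis using yK \<open>a \<in> K\<close> by simp
        next
          case False then have "b \<in> K" using ab by auto
          then show ?thesis using K(2) \<open>a \<in> K\<close> ab(3) unfolding cq_def by blast
        qed
      qed
    qed
    moreover have "insert y K \<subseteq> X" using K sub y by auto
    ultimately have "card (insert y K) \<le> w" using cb unfolding cb_def by blast
    moreover have "finite K" using finite_subset[OF subset_trans[OF K(1) sub] fin] .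
    ultimately have "Suc (card K) \<le> w" using y(2) by simp
    then show ?thesis by simp
  qed
qed

lemma ramsey:
  assumes "finite S" "\<forall>x\<in>S. \<forall>y\<in>S. \<forall>z\<in>S. x \<noteq> y \<longrightarrow> x \<noteq> z \<longrightarrow> y \<noteq> z \<longrightarrow> E x y \<or> E x z \<or> E y z"
    "cb E S k" "\<And>x y. E x y \<Longrightarrow> E y x" "\<And>x. \<not> E x x"
  shows "2 * card S \<le> k * (k + 3)"
  using assms
proof (induction k arbitrary: S)
  case 0
  have "S = {}"
  proof (rule ccontr)
    assume "S \<noteq> {}" then obtain x where "x \<in> S" by blast
    moreover have "cq E {x}" unfolding cq_def by simp
    ultimately have "card {x} \<le> 0" using "0.prems"(3) unfolding cb_def by (meson empty_subsetI insert_subset)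
    then show False by simp
  qed
  then show ?case by simp
next
  case (Suc k)
  show ?case
  proof (cases "S = {}")
    case True then show ?thesis by simp
  next
    case False
    then obtain x where x: "x \<in> S" by blast
    define A where "A = {y\<in>S. E x y}"
    define B where "B = {y\<in>S. y \<noteq> x \<and> \<not> E x y}"
    have SU: "S = insert x (A \<union> B)" using x unfolding A_def B_def by auto
    have finA: "finite A" "finite B" using Suc.prems(1) unfolding A_def B_def by auto
    have "cq E B" unfolding cq_def
    proof (intro ballI impI)
      fix y z assume "y \<in> B" "z \<in> B" "y \<noteq> z"
      then have "y \<in> S" "z \<in> S" "y \<noteq> x" "z \<noteq> x" "\<not> E x y" "\<not> E x z" unfolding B_def by auto
      then show "E y z" using Suc.prems(2) x \<open>y \<noteq> z\<close> by metis
    qed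
    moreover have "B \<subseteq> S" unfolding B_def by auto
    ultimately have cB: "card B \<le> Suc k" using Suc.prems(3) unfolding cb_def by blast
    have cbA: "cb E A k" unfolding cb_def
    proof (intro allI impI)
      fix K assume K: "K \<subseteq> A" "cq E K"
      have "x \<notin> K" using K Suc.prems(5) unfolding A_def by auto
      have "\<forall>y\<in>K. E x y" using K unfolding A_def by auto
      moreover then have "\<forall>y\<in>K. E y x" using Suc.prems(4) by metis
      ultimately have "cq E (insert x K)" using K unfolding cq_def by auto
      moreover have "insert x K \<subseteq> S" using K x unfolding A_def by auto
      ultimately have "card (insert x K) \<le> Suc k" using Suc.prems(3) unfolding cb_def by blast
      moreover have "finite K" using finite_subset[OF K(1) finA(1)] .
      ultimately show "card K \<le> k" using \<open>x \<notin> K\<close> by simp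
    qed
    have trA: "\<forall>x\<in>A. \<forall>y\<in>A. \<forall>z\<in>A. x \<noteq> y \<longrightarrow> x \<noteq> z \<longrightarrow> y \<noteq> z \<longrightarrow> E x y \<or> E x z \<or> E y z"
    proof (intro ballI impI)
      fix p q r assume "p \<in> A" "q \<in> A" "r \<in> A" "p \<noteq> q" "p \<noteq> r" "q \<noteq> r"
      moreover have "A \<subseteq> S" unfolding A_def by auto
      ultimately show "E p q \<or> E p r \<or> E q r" using Suc.prems(2) by blast
    qed
    have cA: "2 * card A \<le> k * (k + 3)" by (rule Suc.IH[OF finA(1) trA cbA Suc.prems(4) Suc.prems(5)])
    have "card S \<le> Suc (card (A \<union> B))"
      unfolding SU using finA by (simp add: card_insert_if)
    also have "card (A \<union> B) \<le> card A + card B" by (rule card_Un_le)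
    finally have "card S \<le> Suc (card A + card B)" by simp
    moreover have "Suc k * (Suc k + 3) = k * (k + 3) + 2 * k + 4" by (simp add: algebra_simps)
    ultimately show ?thesis using cA cB by linarith
  qed
qed

context
  fixes V :: "'a set" and E :: "'a \<Rightarrow> 'a \<Rightarrow> bool"
  assumes sg: "simple_graph V E"
    and nf: "\<not> has_induced V E 5 fork_edge"
    and nd: "\<not> has_induced V E 5 dart_edge"
begin

lemma gsym: "E x y \<Longrightarrow> E y x" using sg unfolding simple_graph_def by blast
lemma girr: "\<not> E x x" using sg unfolding simple_graph_def by blast
lemma gfin: "finite V" using sg unfolding simple_graph_def by blast
lemma Esym: "E x y = E y x" using gsym by blast

lemma fork:
  assumes V: "fc \<in> V" "fa \<in> V" "fb \<in> V" "fm \<in> V" "fe \<in> V"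
    and e: "E fc fa" "E fc fb" "E fc fm" "E fm fe"
    and n: "\<not> E fa fb" "\<not> E fa fm" "\<not> E fa fe" "\<not> E fb fm" "\<not> E fb fe" "\<not> E fc fe"
    and d: "fa \<noteq> fb"
  shows False
proof -
  have e': "E fa fc" "E fb fc" "E fm fc" "E fe fm" using e gsym by auto
  have n': "\<not> E fb fa" "\<not> E fm fa" "\<not> E fe fa" "\<not> E fm fb" "\<not> E fe fb" "\<not> E fe fc" using n gsym by auto
  have ir: "E fc fc = False" "E fa fa = False" "E fb fb = False" "E fe fe = False" "E fm fm = False" using girr by auto
  have dist: "fc \<noteq> fa" "fc \<noteq> fb" "fc \<noteq> fe" "fc \<noteq> fm" "fa \<noteq> fe" "fa \<noteq> fm" "fb \<noteq> fe" "fb \<noteq> fm" "fe \<noteq> fm"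
    using e e' n n' ir by auto
  define f where "f = (\<lambda>i::nat. if i = 0 then fc else if i = 1 then fa else if i = 2 then fb else if i = 3 then fe else fm)"
  have I: "{0..<5::nat} = {0,1,2,3,4}" by auto
  have "inj_on f {0..<5}" unfolding I f_def inj_on_def using dist d by auto
  moreover have "f ` {0..<5} \<subseteq> V" unfolding I f_def using V by auto
  moreover have "\<forall>i\<in>{0..<5}. \<forall>j\<in>{0..<5}. E (f i) (f j) \<longleftrightarrow> fork_edge i j"
    unfolding I f_def
    by (simp add: fork_edge_def doubleton_eq_iff e e' n n' ir)
  ultimately show False using nf unfolding has_induced_def by blast
qed

lemma dart:
  assumes V: "dc \<in> V" "dv \<in> V" "dl \<in> V" "dr \<in> V" "dt \<in> V"
    and e: "E dc dv" "E dc dl" "E dc dr" "E dt dc" "E dt dl" "E dt dr"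
    and n: "\<not> E dv dl" "\<not> E dv dr" "\<not> E dl dr" "\<not> E dt dv"
    and d: "dl \<noteq> dr"
  shows False
proof -
  have e': "E dv dc" "E dl dc" "E dr dc" "E dc dt" "E dl dt" "E dr dt" using e gsym by auto
  have n': "\<not> E dl dv" "\<not> E dr dv" "\<not> E dr dl" "\<not> E dv dt" using n gsym by auto
  have ir: "E dc dc = False" "E dv dv = False" "E dl dl = False" "E dr dr = False" "E dt dt = False" using girr by auto
  have dist: "dc \<noteq> dv" "dc \<noteq> dl" "dc \<noteq> dr" "dc \<noteq> dt" "dv \<noteq> dl" "dv \<noteq> dr" "dv \<noteq> dt" "dl \<noteq> dt" "dr \<noteq> dt"
    using e e' n n' ir by auto
  define f where "f = (\<lambda>i::nat. if i = 0 then dc else if i = 1 then dv else if i = 2 then dl else if i = 3 then dr else dt)"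
  have I: "{0..<5::nat} = {0,1,2,3,4}" by auto
  have "inj_on f {0..<5}" unfolding I f_def inj_on_def using dist d by auto
  moreover have "f ` {0..<5} \<subseteq> V" unfolding I f_def using V by auto
  moreover have "\<forall>i\<in>{0..<5}. \<forall>j\<in>{0..<5}. E (f i) (f j) \<longleftrightarrow> dart_edge i j"
    unfolding I f_def
    by (simp add: dart_edge_def doubleton_eq_iff e e' n n' ir)
  ultimately show False using nd unfolding has_induced_def by blast
qed

lemma two:
  assumes V: "c \<in> V" "a1 \<in> V" "a2 \<in> V" "a3 \<in> V" "y \<in> V" "u \<in> V"
    and ca: "E c a1" "E c a2" "E c a3"
    and st: "\<not> E a1 a2" "\<not> E a1 a3" "\<not> E a2 a3" "a1 \<noteq> a2" "a1 \<noteq> a3" "a2 \<noteq> a3"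
    and h: "\<not> E c y" "E c u" "E y u"
  shows "(E y a1 \<and> E y a2) \<or> (E y a1 \<and> E y a3) \<or> (E y a2 \<and> E y a3)"
proof -
  have s1: "E y a2 \<or> E y a3" if "E y a1"
  proof (rule ccontr)
    assume "\<not> ?thesis"
    then show False using that V ca st h
      by - (rule fork[of c a2 a3 a1 y], simp_all add: Esym)
  qed
  have s2: "E y a1 \<or> E y a3" if "E y a2"
  proof (rule ccontr)
    assume "\<not> ?thesis"
    then show False using that V ca st h
      by - (rule fork[of c a1 a3 a2 y], simp_all add: Esym)
  qed
  have s3: "E y a1 \<or> E y a2" if "E y a3"
  proof (rule ccontr)
    assume "\<not> ?thesis"
    then show False using that V ca st h
      by - (rule fork[of c a1 a2 a3 y], simp_all add: Esym)
  qed
  show ?thesis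
  proof (cases "E y a1 \<or> E y a2 \<or> E y a3")
    case True then show ?thesis using s1 s2 s3 by blast
  next
    case False
    have u2: "\<not> (E u ai \<and> E u aj)" if "ai \<in> {a1,a2,a3}" "aj \<in> {a1,a2,a3}" "ai \<noteq> aj" for ai aj
    proof
      assume "E u ai \<and> E u aj"
      moreover have "ai \<in> V" "aj \<in> V" "E c ai" "E c aj" "\<not> E ai aj" "\<not> E y ai" "\<not> E y aj"
        using that V ca st False Esym by auto
      ultimately show False using V h that
        by - (rule dart[of u y ai aj c], simp_all add: Esym)
    qed
    have f2: False if "ai \<in> {a1,a2,a3}" "aj \<in> {a1,a2,a3}" "ai \<noteq> aj" "\<not> E u ai" "\<not> E u aj" for ai aj
    proof -
      have "ai \<in> V" "aj \<in> V" "E c ai" "E c aj" "\<not> E ai aj" "\<not> E y ai" "\<not> E y aj"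
        using that V ca st False Esym by auto
      then show False using V h that
        by - (rule fork[of c ai aj u y], simp_all add: Esym)
    qed
    show ?thesis using u2[of a1 a2] u2[of a1 a3] u2[of a2 a3] f2[of a1 a2] f2[of a1 a3] f2[of a2 a3] st by blast
  qed
qed

lemmas fk = fork and dt = dart and tw = two
lemmas sy = gsym and ir = girr and fV = gfin and Es = Esym

lemma f3:
  assumes V: "y \<in> V" "z \<in> V" "x \<in> V" "a1 \<in> V" "a2 \<in> V" "a3 \<in> V"
    and t: "(E y a1 \<and> E y a2) \<or> (E y a1 \<and> E y a3) \<or> (E y a2 \<and> E y a3)"
    and st: "\<not> E a1 a2" "\<not> E a1 a3" "\<not> E a2 a3" "a1 \<noteq> a2" "a1 \<noteq> a3" "a2 \<noteq> a3"
    and nz: "\<not> E z a1" "\<not> E z a2" "\<not> E z a3" "\<not> E x a1" "\<not> E x a2" "\<not> E x a3"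
    and h: "E y z" "E z x" "\<not> E y x"
  shows False
  using t
proof (elim disjE conjE)
  assume "E y a1" "E y a2"
  then show False using V st nz h by - (rule fk[of y a1 a2 z x], simp_all add: Es)
next
  assume "E y a1" "E y a3"
  then show False using V st nz h by - (rule fk[of y a1 a3 z x], simp_all add: Es)
next
  assume "E y a2" "E y a3"
  then show False using V st nz h by - (rule fk[of y a2 a3 z x], simp_all add: Es)
qed

lemma main:
  assumes "X \<subseteq> V" "cb E X w"
  shows "col E X (w^2)"
  using assms
proof (induction "card X" arbitrary: X w rule: less_induct)
  case less
  have XV: "X \<subseteq> V" using less.prems(1) .
  have finX: "finite X" using finite_subset[OF XV fV] .
  show ?case
  proof (cases "X = {}")
    case True then show ?thesis by (simp add: col_empty)
  next
    case False
    then obtain c where c: "c \<in> X" by blast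
    have cV: "c \<in> V" using c XV by blast
    have "cq E {c}" unfolding cq_def by simp
    moreover have "{c} \<subseteq> X" using c by simp
    ultimately have "card {c} \<le> w" using less.prems(2) unfolding cb_def by blast
    then have w1: "1 \<le> w" by simp
    define N where "N = {u\<in>X. E c u}"
    have NX: "N \<subseteq> X" unfolding N_def by auto
    have cN: "c \<notin> N" unfolding N_def using ir by auto
    show ?thesis
    proof (cases "\<exists>a1 a2 a3. a1 \<in> N \<and> a2 \<in> N \<and> a3 \<in> N \<and> a1 \<noteq> a2 \<and> a1 \<noteq> a3 \<and> a2 \<noteq> a3 \<and> \<not> E a1 a2 \<and> \<not> E a1 a3 \<and> \<not> E a2 a3")
      case False
      have nst: "\<forall>x\<in>N. \<forall>y\<in>N. \<forall>z\<in>N. x \<noteq> y \<longrightarrow> x \<noteq> z \<longrightarrow> y \<noteq> z \<longrightarrow> E x y \<or> E x z \<or> E y z"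
        using False by blast
      have cbN: "cb E N (w - 1)"
      proof (rule cb_ext[OF less.prems(2) finX NX])
        fix K assume "K \<subseteq> N" "cq E K" "K \<noteq> {}"
        then show "\<exists>y\<in>X. y \<notin> K \<and> (\<forall>x\<in>K. E y x)" using c cN unfolding N_def by blast
      qed (rule sy)
      have finN: "finite N" using finite_subset[OF NX finX] .
      have r: "2 * card N \<le> (w - 1) * (w - 1 + 3)"
        by (rule ramsey[OF finN nst cbN sy ir])
      obtain m where m: "w = Suc m" using w1 by (cases w) auto
      have "m * (m + 3) < 2 * (Suc m)^2" by (simp add: power2_eq_square algebra_simps)
      then have deg: "card N < w^2" using r m by simp
      have "card (X - {c}) < card X" using card_Diff1_less[OF finX c] .
      moreover have "X - {c} \<subseteq> V" using XV by blast
      moreover have "cb E (X - {c}) w" using cb_sub[OF less.prems(2)] by blast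
      ultimately have "col E (X - {c}) (w^2)" using less.hyps by blast
      moreover have "card {u\<in>X. E c u} < w^2" using deg unfolding N_def .
      ultimately show ?thesis using col_vertex[OF finX c] sy ir by blast
    next
      case True
      then obtain a1 a2 a3 where aN: "a1 \<in> N" "a2 \<in> N" "a3 \<in> N"
        and ad: "a1 \<noteq> a2" "a1 \<noteq> a3" "a2 \<noteq> a3"
        and ast: "\<not> E a1 a2" "\<not> E a1 a3" "\<not> E a2 a3" by blast
      have aX: "a1 \<in> X" "a2 \<in> X" "a3 \<in> X" using aN NX by auto
      have aV: "a1 \<in> V" "a2 \<in> V" "a3 \<in> V" using aX XV by auto
      have ca: "E c a1" "E c a2" "E c a3" using aN unfolding N_def by auto
      define M where "M = {y\<in>X. y \<noteq> c \<and> \<not> E c y}"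
      define L2 where "L2 = {y\<in>M. \<exists>u\<in>N. E y u}"
      define Z where "Z = {y\<in>M. \<not> (\<exists>u\<in>N. E y u)}"
      define Z3 where "Z3 = {z\<in>Z. \<exists>y\<in>L2. E z y}"
      define Z4 where "Z4 = {z\<in>Z. \<not> (\<exists>y\<in>L2. E z y)}"
      define T where "T = {u\<in>N. E u a1}"
      define P where "P = {u\<in>N. \<not> E u a1}"
      define R1 where "R1 = {y\<in>L2. E y a1}"
      define R2 where "R2 = {y\<in>L2. \<not> E y a1}"
      have inV: "x \<in> V" if "x \<in> X" for x using that XV by blast
      have L2M: "L2 \<subseteq> M" and ZM: "Z \<subseteq> M" and MX: "M \<subseteq> X" unfolding L2_def Z_def M_def by auto
      have L2X: "L2 \<subseteq> X" and ZX: "Z \<subseteq> X" and Z3X: "Z3 \<subseteq> X" unfolding L2_def Z_def M_def Z3_def by auto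
      have twoL: "(E y a1 \<and> E y a2) \<or> (E y a1 \<and> E y a3) \<or> (E y a2 \<and> E y a3)" if yL: "y \<in> L2" for y
      proof -
        obtain u where u: "u \<in> N" "E y u" using yL unfolding L2_def by blast
        have "y \<in> X" "\<not> E c y" using that unfolding L2_def M_def by auto
        moreover have "u \<in> X" "E c u" using u unfolding N_def by auto
        ultimately show ?thesis
          using tw[of c a1 a2 a3 y u] cV aV inV ca ad ast u(2) by blast
      qed
      have Znb: "\<not> E z x" "\<not> E x z" if "z \<in> Z" "x \<in> N" for z x
        using that Es unfolding Z_def by auto
      have Zna: "\<not> E z a1" "\<not> E z a2" "\<not> E z a3" if "z \<in> Z" for z
        using Znb[OF that] aN by auto
      have Mc: "\<not> E c y" "\<not> E y c" "y \<noteq> c" if "y \<in> M" for y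
        using that Es unfolding M_def by auto
      have F3: False if "y \<in> L2" "z \<in> Z" "x \<in> Z" "E y z" "E z x" "\<not> E y x" for y z x
      proof -
        have "y \<in> V" "z \<in> V" "x \<in> V" using that L2M ZM MX inV by auto
        then show False using f3[of y z x a1 a2 a3] twoL[OF that(1)] ast ad Zna[OF that(2)] Zna[OF that(3)] that(4-6) aV
          by blast
      qed

      have Xpart: "X = insert c (N \<union> L2 \<union> Z3 \<union> Z4)"
        using c unfolding N_def L2_def Z3_def Z4_def Z_def M_def by auto
      have Z4anti: "\<not> E z x \<and> \<not> E x z" if "z \<in> Z4" "x \<in> X - Z4" for z x
      proof -
        have zZ: "z \<in> Z" using that unfolding Z4_def by auto
        have "\<not> E z x"
        proof
          assume zx: "E z x"
          have "x \<in> insert c (N \<union> L2 \<union> Z3)" using that Xpart by auto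
          then show False
          proof (elim insertE UnE)
            assume "x = c" then show False using zx Mc zZ ZM by auto
          next
            assume "x \<in> N" then show False using zx Znb zZ by auto
          next
            assume "x \<in> L2" then show False using zx that(1) unfolding Z4_def by auto
          next
            assume xZ3: "x \<in> Z3"
            then obtain y where y: "y \<in> L2" "E x y" unfolding Z3_def by blast
            have "x \<in> Z" using xZ3 unfolding Z3_def by auto
            moreover have "\<not> E y z" using that(1) y(1) Es unfolding Z4_def by auto
            moreover have "E y x" "E x z" using y(2) zx Es by auto
            ultimately show False using F3[of y x z] y(1) zZ by blast
          qed
        qed
        then show ?thesis using Es by auto
      qed
      show ?thesis
      proof (cases "Z4 = {}")
        case False
        have Z4X: "Z4 \<subseteq> X" using ZM MX unfolding Z4_def by auto
        have "c \<notin> M" unfolding M_def by auto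
        then have cZ4: "c \<notin> Z4" using ZM unfolding Z4_def by auto
        have "card Z4 < card X" using psubset_card_mono[OF finX] Z4X cZ4 c by blast
        then have col1: "col E Z4 (w^2)" using less.hyps[of Z4 w] Z4X XV cb_sub[OF less.prems(2) Z4X] by blast
        have "card (X - Z4) < card X" using psubset_card_mono[OF finX] False Z4X by blast
        then have col2: "col E (X - Z4) (w^2)" using less.hyps[of "X - Z4" w] XV cb_sub[OF less.prems(2)] by blast
        have "col E (Z4 \<union> (X - Z4)) (w^2)" using col_split[OF col1 col2] Z4anti by blast
        moreover have "Z4 \<union> (X - Z4) = X" using Z4X by blast
        ultimately show ?thesis by simp
      next
        case True
        have w2: "2 \<le> w"
        proof -
          have "cq E {c, a1}" using ca Es unfolding cq_def by auto
          moreover have "{c, a1} \<subseteq> X" using c aX by auto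
          ultimately have "card {c, a1} \<le> w" using less.prems(2) unfolding cb_def by blast
          moreover have "c \<noteq> a1" using ca ir by auto
          ultimately show ?thesis by simp
        qed
        have Xeq: "X = T \<union> (P \<union> Z3) \<union> insert c R1 \<union> R2"
          using Xpart True unfolding T_def P_def R1_def R2_def by auto
        have TX: "T \<subseteq> X" using NX unfolding T_def by auto
        have cT: "c \<notin> T" using cN unfolding T_def by auto
        have cbT: "cb E T (w - 2)" unfolding cb_def
        proof (intro allI impI)
          fix K assume K: "K \<subseteq> T" "cq E K"
          have "cq E (insert c (insert a1 K))" unfolding cq_def
          proof (intro ballI impI)
            fix p q assume pq: "p \<in> insert c (insert a1 K)" "q \<in> insert c (insert a1 K)" "p \<noteq> q"
            have Kc: "E c k" "E k c" "E a1 k" "E k a1" if "k \<in> K" for k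
              using that K(1) Es unfolding T_def N_def by auto
            have "E a1 c" using sy[OF ca(1)] .
            then show "E p q" using pq Kc K(2) ca(1) unfolding cq_def by auto
          qed
          moreover have "insert c (insert a1 K) \<subseteq> X" using K TX c aX by auto
          ultimately have "card (insert c (insert a1 K)) \<le> w" using less.prems(2) unfolding cb_def by blast
          moreover have "finite K" using finite_subset[OF subset_trans[OF K(1) TX] finX] .
          moreover have "a1 \<notin> K" using K(1) ir unfolding T_def by auto
          moreover have "c \<notin> K" using K(1) cT by auto
          moreover have "c \<noteq> a1" using ca ir by auto
          ultimately show "card K \<le> w - 2" by simp
        qed
        have "card T < card X" using psubset_card_mono[OF finX] TX cT c by blast
        then have colT: "col E T ((w - 2)^2)" using less.hyps[of T "w - 2"] TX XV cbT by blast
        have PN: "P \<subseteq> N" unfolding P_def by auto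
        have Z3Z: "Z3 \<subseteq> Z" unfolding Z3_def by auto
        have G1X: "P \<union> Z3 \<subseteq> X" using PN NX Z3Z ZM MX by auto
        have PZ: "\<not> E p z" "\<not> E z p" if "p \<in> P" "z \<in> Z3" for p z
          using Znb[of z p] that PN Z3Z by auto
        have p3P: "E x z" if "x \<in> P" "y \<in> P" "z \<in> P" "E x y" "E y z" "x \<noteq> z" for x y z
        proof (rule ccontr)
          assume "\<not> E x z"
          have "x \<in> V" "y \<in> V" "z \<in> V" "E c x" "E c y" "E c z" "\<not> E x a1" "\<not> E y a1" "\<not> E z a1"
            using that PN NX inV unfolding P_def N_def by auto
          then show False using \<open>\<not> E x z\<close> that(4-6) cV aV ca
            by - (rule dt[of c a1 x z y], simp_all add: Es)
        qed
        have yZ3: "E y x" if "y \<in> L2" "z \<in> Z3" "x \<in> Z3" "E z y" "E z x" for y z x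
        proof (rule ccontr)
          assume "\<not> E y x"
          then show False using F3[of y z x] that Z3Z Es by auto
        qed
        have p3Z: "E x z" if yy: "x \<in> Z3" "y \<in> Z3" "z \<in> Z3" "E x y" "E y z" "x \<noteq> z" for x y z
        proof (rule ccontr)
          assume nxz: "\<not> E x z"
          obtain u where u: "u \<in> L2" "E y u" using yy(2) unfolding Z3_def by blast
          have ux: "E u x" using yZ3[of u y x] u that Es by auto
          have uz: "E u z" using yZ3[of u y z] u that Es by auto
          obtain a where a: "a \<in> {a1,a2,a3}" "E u a" using twoL[OF u(1)] by blast
          have "u \<in> V" "x \<in> V" "z \<in> V" using u(1) yy(1,3) L2X Z3X inV by blast+
          moreover have "a \<in> V" using a(1) aV by blast
          moreover have "\<not> E x a" "\<not> E z a" using Zna that Z3Z a by auto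
          moreover have "E a c" using a ca Es by auto
          moreover have "\<not> E x c" "\<not> E z c" "\<not> E u c" using Mc that Z3Z ZM u L2M by auto
          ultimately show False using ux uz nxz that(6) a(2) cV
            by - (rule fk[of u x z a c], simp_all add: Es)
        qed
        have p3G1: "p3f E (P \<union> Z3)" unfolding p3f_def
        proof (intro ballI impI)
          fix x y z assume xyz: "x \<in> P \<union> Z3" "y \<in> P \<union> Z3" "z \<in> P \<union> Z3" "E x y" "E y z" "x \<noteq> z"
          show "E x z"
          proof (cases "y \<in> P")
            case True
            then have "x \<in> P" "z \<in> P" using xyz PZ by blast+
            then show ?thesis using p3P True xyz by blast
          next
            case False
            then have "y \<in> Z3" using xyz by blast
            then have "x \<in> Z3" "z \<in> Z3" using xyz PZ by blast+
            then show ?thesis using p3Z \<open>y \<in> Z3\<close> xyz by blast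
          qed
        qed
        have cbG1: "cb E (P \<union> Z3) (w - 1)"
        proof (rule cb_ext[OF less.prems(2) finX G1X])
          fix K assume K: "K \<subseteq> P \<union> Z3" "cq E K" "K \<noteq> {}"
          show "\<exists>y\<in>X. y \<notin> K \<and> (\<forall>x\<in>K. E y x)"
          proof (cases "K \<subseteq> P")
            case True
            then show ?thesis using c cN PN unfolding N_def by blast
          next
            case False
            then obtain z where z: "z \<in> K" "z \<in> Z3" using K(1) by blast
            have KZ: "K \<subseteq> Z3"
            proof
              fix x assume "x \<in> K"
              show "x \<in> Z3"
              proof (rule ccontr)
                assume "x \<notin> Z3"
                then have "x \<in> P" using K(1) \<open>x \<in> K\<close> by blast
                then have "E c x" using PN unfolding N_def by auto
                moreover have "\<not> E c z" using Mc z(2) Z3Z ZM by blast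
                ultimately have "x \<noteq> z" by auto
                then have "E x z" using K(2) \<open>x \<in> K\<close> z(1) unfolding cq_def by blast
                then show False using PZ \<open>x \<in> P\<close> z(2) by blast
              qed
            qed
            obtain u where u: "u \<in> L2" "E z u" using z(2) unfolding Z3_def by blast
            have "\<forall>x\<in>K. E u x"
            proof
              fix x assume x: "x \<in> K"
              show "E u x"
              proof (cases "x = z")
                case True then show ?thesis using u Es by auto
              next
                case False
                then have "z \<noteq> x" by simp
                then have "E z x" using K(2) x z(1) unfolding cq_def by blast
                then show ?thesis using yZ3[of u z x] u z KZ x by blast
              qed
            qed
            moreover have "u \<notin> K" using u(1) KZ Z3Z L2M unfolding L2_def Z_def by auto
            moreover have "u \<in> X" using u(1) L2M MX by auto
            ultimately show ?thesis by blast
          qed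
        qed (rule sy)
        have colG1: "col E (P \<union> Z3) (w - 1)"
          using col_p3[OF finite_subset[OF G1X finX] p3G1 cbG1 sy ir] .
        have R1L: "R1 \<subseteq> L2" unfolding R1_def by auto
        have G2X: "insert c R1 \<subseteq> X" using c R1L L2M MX by auto
        have p3R: "E x z" if "a \<in> N" "x \<in> L2" "y \<in> L2" "z \<in> L2" "E x a" "E y a" "E z a" "E x y" "E y z" "x \<noteq> z" for a x y z
        proof (rule ccontr)
          assume "\<not> E x z"
          have "a \<in> V" "x \<in> V" "y \<in> V" "z \<in> V" using that NX L2M MX inV by auto
          moreover have "E a c" using that(1) Es unfolding N_def by auto
          moreover have "\<not> E c x" "\<not> E c z" "\<not> E y c" using Mc that L2M by auto
          ultimately show False using \<open>\<not> E x z\<close> that(5-10) cV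
            by - (rule dt[of a c x z y], simp_all add: Es)
        qed
        have p3G2: "p3f E (insert c R1)" unfolding p3f_def
        proof (intro ballI impI)
          fix x y z assume xyz: "x \<in> insert c R1" "y \<in> insert c R1" "z \<in> insert c R1" "E x y" "E y z" "x \<noteq> z"
          have cR: "\<not> E c r" "\<not> E r c" if "r \<in> R1" for r using Mc that R1L L2M by auto
          have "x \<noteq> c" "y \<noteq> c" "z \<noteq> c" using xyz cR ir by auto
          then have "x \<in> R1" "y \<in> R1" "z \<in> R1" using xyz by auto
          then show "E x z" using p3R[of a1 x y z] aN xyz unfolding R1_def by auto
        qed
        have cbG2: "cb E (insert c R1) (w - 1)"
        proof (rule cb_ext[OF less.prems(2) finX G2X])
          fix K assume K: "K \<subseteq> insert c R1" "cq E K" "K \<noteq> {}"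
          have "\<forall>x\<in>K. E a1 x" using K(1) ca Es unfolding R1_def by auto
          moreover have "a1 \<notin> K" using K(1) ca ir Mc[of a1] R1L L2M by auto
          ultimately show "\<exists>y\<in>X. y \<notin> K \<and> (\<forall>x\<in>K. E y x)" using aX by blast
        qed (rule sy)
        have colG2: "col E (insert c R1) (w - 1)"
          using col_p3[OF finite_subset[OF G2X finX] p3G2 cbG2 sy ir] .
        have R2L: "R2 \<subseteq> L2" unfolding R2_def by auto
        have R2a2: "E y a2" if "y \<in> R2" for y using twoL[of y] that unfolding R2_def by auto
        have G3X: "R2 \<subseteq> X" using R2L L2M MX by auto
        have p3G3: "p3f E R2" unfolding p3f_def
        proof (intro ballI impI)
          fix x y z assume xyz: "x \<in> R2" "y \<in> R2" "z \<in> R2" "E x y" "E y z" "x \<noteq> z"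
          then show "E x z" using p3R[of a2 x y z] aN R2a2 R2L by blast
        qed
        have cbG3: "cb E R2 (w - 1)"
        proof (rule cb_ext[OF less.prems(2) finX G3X])
          fix K assume K: "K \<subseteq> R2" "cq E K" "K \<noteq> {}"
          have "\<forall>x\<in>K. E a2 x" using K(1) R2a2 Es by blast
          moreover have "a2 \<notin> K" using K(1) ca Mc[of a2] R2L L2M by auto
          ultimately show "\<exists>y\<in>X. y \<notin> K \<and> (\<forall>x\<in>K. E y x)" using aX by blast
        qed (rule sy)
        have colG3: "col E R2 (w - 1)"
          using col_p3[OF finite_subset[OF G3X finX] p3G3 cbG3 sy ir] .
        have "col E (T \<union> (P \<union> Z3) \<union> insert c R1 \<union> R2) ((w - 2)^2 + (w - 1) + (w - 1) + (w - 1))"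
          using col_union[OF col_union[OF col_union[OF colT colG1] colG2] colG3] .
        then have "col E X ((w - 2)^2 + (w - 1) + (w - 1) + (w - 1))" using Xeq by simp
        moreover have "(w - 2)^2 + (w - 1) + (w - 1) + (w - 1) \<le> w^2"
        proof -
          obtain m where m: "w = m + 2" using w2 by (metis add.commute le_Suc_ex)
          show ?thesis unfolding m by (simp add: power2_eq_square algebra_simps)
        qed
        ultimately show ?thesis using col_mono by blast
      qed
    qed
  qed
qed

end

theorem corollary3p7:
  fixes V :: "'a set" and E :: "'a \<Rightarrow> 'a \<Rightarrow> bool"
  assumes "simple_graph V E"
    and "\<not> has_induced V E 5 fork_edge"
    and "\<not> has_induced V E 5 dart_edge"
  shows "chromatic_number V E \<le> (clique_number V E) ^ 2"
proof -
  let ?w = "clique_number V E"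
  have finV: "finite V" using assms(1) unfolding simple_graph_def by blast
  have sub: "{card K | K. clique V E K} \<subseteq> card ` Pow V" unfolding clique_def by auto
  have fin: "finite {card K | K. clique V E K}"
    using finite_subset[OF sub] finV by simp
  have cbV: "cb E V ?w" unfolding cb_def
  proof (intro allI impI)
    fix K assume "K \<subseteq> V" "cq E K"
    then have "clique V E K" unfolding clique_def cq_def by auto
    then have "card K \<in> {card K | K. clique V E K}" by blast
    then show "card K \<le> ?w" unfolding clique_number_def using Max_ge[OF fin] by blast
  qed
  have "col E V (?w^2)" using main[OF assms(1) assms(2) assms(3) subset_refl cbV] .
  then obtain f where f: "\<forall>x\<in>V. f x < ?w^2" "\<forall>x\<in>V. \<forall>y\<in>V. E x y \<longrightarrow> f x \<noteq> f y"
    unfolding col_def by blast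
  then have "proper_colouring V E (?w^2) f" unfolding proper_colouring_def by blast
  then have "\<exists>c. proper_colouring V E (?w^2) c" by blast
  then show ?thesis unfolding chromatic_number_def by (rule Least_le)
qed

end
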